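(* Let $\varkappa>0$ and $\beta\le 0$ be constants, let $g:\mathbb{R}\to\mathbb{R}$ be a sufficiently smooth function, and let $V_p(\xi_2)=-\left(\xi_2^2-\tfrac14\right)$. For $x_1\in\mathbb{R}$, $\xi_2\in\left[-\tfrac12,\tfrac12\right]$ and a function $f$ write $\langle f\rangle(x_1)=\int_{-1/2}^{1/2} f(x_1,\xi_2)\,d\xi_2$. Consider sequences of sufficiently smooth functions $\overline{c}_j(x_1)$ and $\widetilde{c}_j(x_1,\xi_2)$, $j=0,1,2,\dots$, with $c_j=\overline{c}_j+\widetilde{c}_j$, constructed as follows: $\widetilde{c}_0=\widetilde{c}_1=0$; for every $j\ge 0$, $\overline{c}_j$ solves $$-\varkappa\frac{\partial^2\overline{c}_j}{\partial x_1^2}+\langle V_p\rangle\frac{\partial\overline{c}_j}{\partial x_1}+\Big\langle V_p\frac{\partial\widetilde{c}_j}{\partial x_1}\Big\rangle+g(x_1)\,\delta_{j0}=2\beta\,\overline{c}_j+\beta\Big(\widetilde{c}_j\big(x_1,\tfrac12\big)+\widetilde{c}_j\big(x_1,-\tfrac12\big)\Big);$$ and for every $j\ge 2$, for each $x_1$, $\widetilde{c}_j(x_1,\cdot)$ is the solution of $$\varkappa\frac{\partial^2\widetilde{c}_j}{\partial\xi_2^2}=-\varkappa\frac{\partial^2 c_{j-2}}{\partial x_1^2}+V_p(\xi_2)\frac{\partial c_{j-2}}{\partial x_1}+g(x_1)\,\delta_{j2},\quad \xi_2\in\left(-\tfrac12,\tfrac12\right),$$ $$\pm\varkappa\frac{\partial\widetilde{c}_j}{\partial\xi_2}\Big|_{\xi_2=\pm\frac12}=\beta\,c_{j-2}\big(x_1,\pm\tfrac12\big),\qquad\langle\widetilde{c}_j\rangle=0.$$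 Then for every $j\ge0$, $\widetilde{c}_j(x_1,\xi_2)$ is, for each fixed $x_1$, a polynomial in $\xi_2$ of degree at most $2j$ (with coefficients depending on $x_1$).
   Context: This is the recursive construction of the terms of the asymptotic expansion $c^{(k)}_{\varepsilon r}(x_1,\xi_2)=\sum_{j=0}^k\varepsilon^j c_j(x_1,\xi_2)$, $\xi_2=x_2/\varepsilon$, for the convection–diffusion equation $-\operatorname{div}(\varkappa\nabla c)+V_p(x_2/\varepsilon)\,\partial c/\partial x_1=g(x_1)$ in the thin channel $\mathbb{R}\times(-\varepsilon/2,\varepsilon/2)$ with Robin condition $\varkappa\,\partial c/\partial n=\varepsilon\beta c$ on $x_2=\pm\varepsilon/2$. Here $\delta_{jm}$ is the Kronecker delta. The equation for $\overline{c}_j$ is the solvability (compatibility) condition ensuring the Neumann problem for $\widetilde{c}_{j+2}$ has a solution. *)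

theory Defs
  imports "HOL-Analysis.Analysis" "HOL-Computational_Algebra.Polynomial"
begin

definition Vp :: "real \<Rightarrow> real" where
  "Vp xi = - (xi^2 - 1/4)"

definition avg :: "(real \<Rightarrow> real) \<Rightarrow> real" where
  "avg f = integral {-1/2..1/2} f"

definition dx1 :: "(real \<Rightarrow> real \<Rightarrow> real) \<Rightarrow> real \<Rightarrow> real \<Rightarrow> real" where
  "dx1 f x xi = deriv (\<lambda>t. f t xi) x"

definition dxi :: "(real \<Rightarrow> real \<Rightarrow> real) \<Rightarrow> real \<Rightarrow> real \<Rightarrow> real" where
  "dxi f x xi = deriv (\<lambda>s. f x s) xi"

text \<open>Twice differentiable everywhere (the "sufficiently smooth" hypothesis).\<close>
definition twice_diff :: "(real \<Rightarrow> real) \<Rightarrow> bool" where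
  "twice_diff f \<longleftrightarrow> (\<forall>x. f differentiable (at x)) \<and> (\<forall>x. deriv f differentiable (at x))"

end

theory Submission imports Defs "HOL-Computational_Algebra.Polynomial" begin

lemma pderiv_sum': "pderiv (sum f A) = (\<Sum>x\<in>A. pderiv (f x))"
  using higher_pderiv_sum[where n=1] by simp

lemma antider: fixes q :: "real poly" shows "\<exists>P. pderiv P = q \<and> degree P \<le> degree q + 1"
proof -
  define P where "P = (\<Sum>i\<le>degree q. monom (coeff q i / real (Suc i)) (Suc i))"
  have "pderiv P = (\<Sum>i\<le>degree q. monom (coeff q i) i)"
    unfolding P_def pderiv_sum' pderiv_monom
    by (intro sum.cong) (auto simp del: of_nat_Suc)
  also have "\<dots> = q" by (rule poly_as_sum_of_monoms)
  finally have "pderiv P = q" .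
  moreover have "degree P \<le> degree q + 1" unfolding P_def
    by (rule degree_sum_le) (auto intro: order.trans[OF degree_monom_le])
  ultimately show ?thesis by blast
qed

definition lag :: "(nat \<Rightarrow> real) \<Rightarrow> nat \<Rightarrow> nat \<Rightarrow> real poly" where
  "lag z n k = smult (1 / (\<Prod>m\<in>{..n}-{k}. (z k - z m))) (\<Prod>m\<in>{..n}-{k}. [:- z m, 1:])"

lemma lag_degree: assumes "k \<le> n" shows "degree (lag z n k) \<le> n"
proof -
  have "degree (\<Prod>m\<in>{..n}-{k}. [:- z m, 1:]) \<le> sum (degree \<circ> (\<lambda>m. [:- z m, 1:])) ({..n}-{k})"
    by (rule degree_prod_sum_le) auto
  also have "\<dots> \<le> card ({..n}-{k})" by simp
  also have "\<dots> \<le> n" using assms by (auto simp: card_Diff_singleton)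
  finally show ?thesis unfolding lag_def by (simp add: degree_smult_le order.trans[OF degree_smult_le])
qed

lemma lag_eval: assumes "inj_on z {..n}" "k \<le> n" "m \<le> n"
  shows "poly (lag z n k) (z m) = (if m = k then 1 else 0)"
proof (cases "m = k")
  case True
  have "(\<Prod>m\<in>{..n}-{k}. (z k - z m)) \<noteq> 0"
    using assms by (auto simp: inj_on_def)
  then show ?thesis using True by (simp add: lag_def poly_prod)
next
  case False
  have "(\<Prod>i\<in>{..n}-{k}. poly [:- z i, 1:] (z m)) = 0"
    using False assms by (intro prod_zero) auto
  then show ?thesis using False by (simp add: lag_def poly_prod)
qed

lemma lagrange: assumes inj: "inj_on z {..n}" and dp: "degree p \<le> n"
  shows "p = (\<Sum>k\<le>n. smult (poly p (z k)) (lag z n k))"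
proof (rule ccontr)
  define d where "d = p - (\<Sum>k\<le>n. smult (poly p (z k)) (lag z n k))"
  assume "\<not> ?thesis"
  then have d0: "d \<noteq> 0" unfolding d_def by simp
  have dd: "degree d \<le> n" unfolding d_def
    by (intro order.trans[OF degree_diff_le_max] max.boundedI dp degree_sum_le)
       (auto intro!: order.trans[OF degree_smult_le] lag_degree)
  have roots: "z ` {..n} \<subseteq> {x. poly d x = 0}"
  proof
    fix x assume "x \<in> z ` {..n}"
    then obtain m where m: "m \<le> n" "x = z m" by auto
    have "(\<Sum>k\<le>n. poly p (z k) * poly (lag z n k) (z m)) = (\<Sum>k\<le>n. if k = m then poly p (z m) else 0)"
      using lag_eval[OF inj _ m(1)] by (intro sum.cong) auto
    also have "\<dots> = poly p (z m)" using m by simp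
    finally show "x \<in> {x. poly d x = 0}" using m by (simp add: d_def poly_sum)
  qed
  have "card (z ` {..n}) \<le> card {x. poly d x = 0}"
    by (rule card_mono[OF poly_roots_finite[OF d0] roots])
  also have "\<dots> \<le> degree d" by (rule card_poly_roots_bound[OF d0])
  finally show False using dd card_image[OF inj] by simp
qed


lemma deriv_lin:
  fixes h :: "nat \<Rightarrow> real \<Rightarrow> real"
  assumes "\<And>k. h k differentiable (at x)"
  shows "deriv (\<lambda>t. \<Sum>k\<le>n. a k * h k t) x = (\<Sum>k\<le>n. a k * deriv (h k) x)"
proof (rule DERIV_imp_deriv)
  have "\<And>k. (h k has_real_derivative deriv (h k) x) (at x)"
    using assms DERIV_deriv_iff_real_differentiable by blast
  then show "((\<lambda>t. \<Sum>k\<le>n. a k * h k t) has_real_derivative (\<Sum>k\<le>n. a k * deriv (h k) x)) (at x)"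
    by (intro DERIV_sum DERIV_cmult) auto
qed

lemma interp_repr:
  fixes F :: "real \<Rightarrow> real \<Rightarrow> real"
  assumes H: "\<forall>t. \<exists>p. degree p \<le> n \<and> (\<forall>xi\<in>I. F t xi = poly p xi)"
    and zI: "\<forall>k\<le>n. z k \<in> I" and inj: "inj_on z {..n}" and xi: "xi \<in> I"
  shows "F t xi = (\<Sum>k\<le>n. poly (lag z n k) xi * F t (z k))"
proof -
  obtain p where p: "degree p \<le> n" "\<forall>xi\<in>I. F t xi = poly p xi" using H by blast
  have "F t xi = poly p xi" using p xi by blast
  also have "\<dots> = poly (\<Sum>k\<le>n. smult (poly p (z k)) (lag z n k)) xi"
    using lagrange[OF inj p(1)] by simp
  also have "\<dots> = (\<Sum>k\<le>n. poly (lag z n k) xi * F t (z k))"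
    unfolding poly_sum using p zI by (intro sum.cong) auto
  finally show ?thesis .
qed

lemma poly_lin: "\<exists>p. degree p \<le> n \<and> (\<forall>xi. (\<Sum>k\<le>n. poly (lag z n k) xi * b k) = poly p xi)"
proof (intro exI conjI allI)
  show "degree (\<Sum>k\<le>n. smult (b k) (lag z n k)) \<le> n"
    by (intro degree_sum_le) (auto intro!: order.trans[OF degree_smult_le] lag_degree)
  fix xi show "(\<Sum>k\<le>n. poly (lag z n k) xi * b k) = poly (\<Sum>k\<le>n. smult (b k) (lag z n k)) xi"
    by (simp add: poly_sum mult.commute)
qed

lemma lemD:
  fixes F :: "real \<Rightarrow> real \<Rightarrow> real"
  assumes H: "\<forall>t. \<exists>p. degree p \<le> n \<and> (\<forall>xi\<in>{-1/2..1/2}. F t xi = poly p xi)"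
    and sm: "\<And>xi. twice_diff (\<lambda>t. F t xi)"
  shows "\<exists>p1 p2. degree p1 \<le> n \<and> degree p2 \<le> n \<and>
     (\<forall>xi\<in>{-1/2..1/2}. dx1 F x1 xi = poly p1 xi \<and> dx1 (dx1 F) x1 xi = poly p2 xi)"
proof -
  define z where "z k = real k / (2 * (real n + 1))" for k
  have inj: "inj_on z {..n}" unfolding z_def inj_on_def by (auto simp: field_simps)
  have zI: "\<forall>k\<le>n. z k \<in> {-1/2..1/2::real}" unfolding z_def by (auto simp: field_simps)
  define G where "G k = (\<lambda>t. F t (z k))" for k
  have d1: "\<And>k t. G k differentiable (at t)" and d2: "\<And>k t. deriv (G k) differentiable (at t)"
    using sm unfolding twice_diff_def G_def by blast+
  have e1: "dx1 F t xi = (\<Sum>k\<le>n. poly (lag z n k) xi * deriv (G k) t)"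
    if xi: "xi \<in> {-1/2..1/2}" for t xi
  proof -
    have "(\<lambda>t. F t xi) = (\<lambda>t. \<Sum>k\<le>n. poly (lag z n k) xi * G k t)"
      using interp_repr[OF H zI inj xi] unfolding G_def by blast
    then show ?thesis unfolding dx1_def using deriv_lin[OF d1] by simp
  qed
  have e2: "dx1 (dx1 F) x1 xi = (\<Sum>k\<le>n. poly (lag z n k) xi * deriv (deriv (G k)) x1)"
    if xi: "xi \<in> {-1/2..1/2}" for xi
  proof -
    have "(\<lambda>t. dx1 F t xi) = (\<lambda>t. \<Sum>k\<le>n. poly (lag z n k) xi * deriv (G k) t)"
      using e1[OF xi] by blast
    then show ?thesis unfolding dx1_def[of "dx1 F"] using deriv_lin[OF d2] by simp
  qed
  obtain p1 where p1: "degree p1 \<le> n" "\<forall>xi. (\<Sum>k\<le>n. poly (lag z n k) xi * deriv (G k) x1) = poly p1 xi"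
    using poly_lin[of n z "\<lambda>k. deriv (G k) x1"] by blast
  obtain p2 where p2: "degree p2 \<le> n" "\<forall>xi. (\<Sum>k\<le>n. poly (lag z n k) xi * deriv (deriv (G k)) x1) = poly p2 xi"
    using poly_lin[of n z "\<lambda>k. deriv (deriv (G k)) x1"] by blast
  show ?thesis using p1 p2 e1 e2 by metis
qed

lemma lemE:
  fixes f :: "real \<Rightarrow> real" and q :: "real poly"
  assumes sm: "twice_diff f" and ode: "\<And>x. x \<in> {-1/2<..<1/2} \<Longrightarrow> deriv (deriv f) x = poly q x"
  shows "\<exists>p. degree p \<le> degree q + 2 \<and> (\<forall>x\<in>{-1/2..1/2}. f x = poly p x)"
proof -
  obtain P1 where P1: "pderiv P1 = q" "degree P1 \<le> degree q + 1" using antider by blast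
  obtain P2 where P2: "pderiv P2 = P1" "degree P2 \<le> degree P1 + 1" using antider by blast
  have df: "\<And>x. (f has_real_derivative deriv f x) (at x)"
    using sm DERIV_deriv_iff_real_differentiable unfolding twice_diff_def by blast
  have ddf: "\<And>x. (deriv f has_real_derivative deriv (deriv f) x) (at x)"
    using sm DERIV_deriv_iff_real_differentiable unfolding twice_diff_def by blast
  define g1 where "g1 x = deriv f x - poly P1 x" for x
  have g1d: "(g1 has_real_derivative deriv (deriv f) x - poly q x) (at x)" for x
    unfolding g1_def using ddf[of x] poly_DERIV[of P1 x] P1(1)
    by (auto intro!: derivative_eq_intros)
  have g1z: "(g1 has_real_derivative 0) (at x)" if "-1/2 < x" "x < 1/2" for x
    using g1d[of x] ode[of x] that by simp
  have "continuous_on {-1/2..1/2} g1"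
    using g1d by (meson DERIV_isCont continuous_at_imp_continuous_on)
  then have g1c: "g1 x = g1 (-1/2)" if "x \<in> {-1/2..1/2}" for x
    using that by (intro DERIV_isconst2[of "-1/2" "1/2"]) (use g1z in \<open>auto\<close>)
  define a where "a = g1 (-1/2)"
  define g2 where "g2 x = f x - poly P2 x - a * x" for x
  have g2d: "(g2 has_real_derivative g1 x - a) (at x)" for x
    unfolding g2_def g1_def using df[of x] poly_DERIV[of P2 x] P2(1)
    by (auto intro!: derivative_eq_intros)
  have g2z: "(g2 has_real_derivative 0) (at x)" if "-1/2 < x" "x < 1/2" for x
    using g2d[of x] g1c[of x] that a_def by simp
  have "continuous_on {-1/2..1/2} g2"
    using g2d by (meson DERIV_isCont continuous_at_imp_continuous_on)
  then have g2c: "g2 x = g2 (-1/2)" if "x \<in> {-1/2..1/2}" for x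
    using that by (intro DERIV_isconst2[of "-1/2" "1/2"]) (use g2z in \<open>auto\<close>)
  define p where "p = P2 + [:g2 (-1/2), a:]"
  have "degree p \<le> degree q + 2"
    unfolding p_def using P1 P2
    by (intro order.trans[OF degree_add_le_max]) auto
  moreover have "\<forall>x\<in>{-1/2..1/2}. f x = poly p x"
  proof
    fix x :: real assume x: "x \<in> {-1/2..1/2}"
    have "f x = g2 x + poly P2 x + a * x" unfolding g2_def by simp
    then show "f x = poly p x" using g2c[OF x] unfolding p_def by simp
  qed
  ultimately show ?thesis by blast
qed


lemma twice_diff_add:
  assumes f: "twice_diff f" and g: "twice_diff g"
  shows "twice_diff (\<lambda>t. f t + g t)"
proof -
  have df: "\<And>x. (f has_real_derivative deriv f x) (at x)" and dg: "\<And>x. (g has_real_derivative deriv g x) (at x)"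
    using f g DERIV_deriv_iff_real_differentiable unfolding twice_diff_def by blast+
  have e: "deriv (\<lambda>t. f t + g t) = (\<lambda>t. deriv f t + deriv g t)"
  proof
    fix t show "deriv (\<lambda>t. f t + g t) t = deriv f t + deriv g t"
      by (rule DERIV_imp_deriv) (intro derivative_intros df dg)
  qed
  show ?thesis using f g unfolding twice_diff_def e
    by (auto intro: differentiable_add)
qed

theorem lemma1:
  fixes kappa beta :: real
    and g :: "real \<Rightarrow> real"
    and cbar :: "nat \<Rightarrow> real \<Rightarrow> real"
    and ctil :: "nat \<Rightarrow> real \<Rightarrow> real \<Rightarrow> real"
    and c :: "nat \<Rightarrow> real \<Rightarrow> real \<Rightarrow> real"
  assumes kappa_pos: "kappa > 0"
    and beta_nonpos: "beta \<le> 0"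
    and c_def: "\<And>j x1 xi. c j x1 xi = cbar j x1 + ctil j x1 xi"
    and smooth_cbar: "\<And>j. twice_diff (cbar j)"
    and smooth_ctil_x1: "\<And>j xi. twice_diff (\<lambda>t. ctil j t xi)"
    and smooth_ctil_xi: "\<And>j x1. twice_diff (\<lambda>s. ctil j x1 s)"
    and ctil0: "\<And>x1 xi. ctil 0 x1 xi = 0"
    and ctil1: "\<And>x1 xi. ctil 1 x1 xi = 0"
    and eq_cbar: "\<And>j x1.
        - kappa * deriv (deriv (cbar j)) x1 + avg Vp * deriv (cbar j) x1
        + avg (\<lambda>xi. Vp xi * dx1 (ctil j) x1 xi) + (if j = 0 then g x1 else 0)
        = 2 * beta * cbar j x1 + beta * (ctil j x1 (1/2) + ctil j x1 (-1/2))"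
    and eq_ctil: "\<And>j x1 xi. j \<ge> 2 \<Longrightarrow> xi \<in> {-1/2<..<1/2} \<Longrightarrow>
        kappa * dxi (dxi (ctil j)) x1 xi
        = - kappa * dx1 (dx1 (c (j - 2))) x1 xi + Vp xi * dx1 (c (j - 2)) x1 xi
          + (if j = 2 then g x1 else 0)"
    and bc_plus: "\<And>j x1. j \<ge> 2 \<Longrightarrow>
        kappa * dxi (ctil j) x1 (1/2) = beta * c (j - 2) x1 (1/2)"
    and bc_minus: "\<And>j x1. j \<ge> 2 \<Longrightarrow>
        - kappa * dxi (ctil j) x1 (-1/2) = beta * c (j - 2) x1 (-1/2)"
    and mean_zero: "\<And>j x1. j \<ge> 2 \<Longrightarrow> avg (\<lambda>xi. ctil j x1 xi) = 0"
  shows "\<forall>j x1. \<exists>p :: real poly. degree p \<le> 2 * j \<and>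
           (\<forall>xi \<in> {-1/2..1/2}. ctil j x1 xi = poly p xi)"
proof
  fix j show "\<forall>x1. \<exists>p :: real poly. degree p \<le> 2 * j \<and> (\<forall>xi \<in> {-1/2..1/2}. ctil j x1 xi = poly p xi)"
  proof (induction j rule: less_induct)
    case (less j)
    show ?case
    proof (cases "j < 2")
      case True
      then have "ctil j x1 xi = 0" for x1 xi using ctil0 ctil1 by (cases j) (auto simp: less_Suc_eq)
      then show ?thesis by (intro allI exI[of _ 0]) auto
    next
      case False
      then have j2: "j \<ge> 2" by simp
      have IH: "\<forall>x1. \<exists>p :: real poly. degree p \<le> 2 * (j-2) \<and> (\<forall>xi \<in> {-1/2..1/2}. ctil (j-2) x1 xi = poly p xi)"
        using less.IH[of "j-2"] j2 by simp
      have Hc: "\<forall>t. \<exists>p. degree p \<le> 2*(j-2) \<and> (\<forall>xi\<in>{-1/2..1/2}. c (j-2) t xi = poly p xi)"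
      proof
        fix t
        obtain p where p: "degree p \<le> 2 * (j-2)" "\<forall>xi \<in> {-1/2..1/2}. ctil (j-2) t xi = poly p xi"
          using IH by blast
        have "degree (p + [:cbar (j-2) t:]) \<le> 2*(j-2)"
          using p(1) by (intro order.trans[OF degree_add_le_max]) auto
        moreover have "\<forall>xi\<in>{-1/2..1/2}. c (j-2) t xi = poly (p + [:cbar (j-2) t:]) xi"
          using p(2) c_def by simp
        ultimately show "\<exists>p. degree p \<le> 2*(j-2) \<and> (\<forall>xi\<in>{-1/2..1/2}. c (j-2) t xi = poly p xi)" by blast
      qed
      have smc: "twice_diff (\<lambda>t. c (j-2) t xi)" for xi
        unfolding c_def by (intro twice_diff_add smooth_cbar smooth_ctil_x1)
      show ?thesis
      proof
        fix x1
        obtain p1 p2 where pp: "degree p1 \<le> 2*(j-2)" "degree p2 \<le> 2*(j-2)"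
          "\<forall>xi\<in>{-1/2..1/2}. dx1 (c (j-2)) x1 xi = poly p1 xi \<and> dx1 (dx1 (c (j-2))) x1 xi = poly p2 xi"
          using lemD[OF Hc smc, of x1] by blast
        define gg where "gg = (if j = 2 then g x1 else 0)"
        define V :: "real poly" where "V = [:1/4, 0, -1:]"
        have V: "Vp xi = poly V xi" for xi by (simp add: V_def Vp_def algebra_simps power2_eq_square)
        have dV: "degree V \<le> 2" by (simp add: V_def)
        define q where "q = smult (1/kappa) (smult (-kappa) p2 + V * p1 + [:gg:])"
        have dq: "degree q \<le> 2*(j-2) + 2"
          unfolding q_def
          apply (rule order.trans[OF degree_smult_le])
          apply (rule order.trans[OF degree_add_le_max])
          apply (rule max.boundedI)
          apply (rule order.trans[OF degree_add_le_max])
          apply (rule max.boundedI)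
          using pp(2) apply (simp add: order.trans[OF degree_smult_le])
          using pp(1) dV apply (simp add: order.trans[OF degree_mult_le])
          apply simp
          done
        have ode: "deriv (deriv (\<lambda>s. ctil j x1 s)) xi = poly q xi" if xi: "xi \<in> {-1/2<..<1/2}" for xi
        proof -
          have xc: "xi \<in> {-1/2..1/2}" using xi by auto
          have "kappa * deriv (deriv (\<lambda>s. ctil j x1 s)) xi
              = - kappa * poly p2 xi + poly V xi * poly p1 xi + gg"
            using eq_ctil[OF j2 xi, of x1] pp(3) xc V unfolding gg_def dxi_def by simp
          then show ?thesis using kappa_pos unfolding q_def by (simp add: field_simps)
        qed
        obtain p where "degree p \<le> degree q + 2" "\<forall>x\<in>{-1/2..1/2}. ctil j x1 x = poly p x"
          using lemE[OF smooth_ctil_xi ode] by blast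
        then show "\<exists>p :: real poly. degree p \<le> 2 * j \<and> (\<forall>xi \<in> {-1/2..1/2}. ctil j x1 xi = poly p xi)"
          using dq j2 by (intro exI[of _ p]) auto
      qed
    qed
  qed
qed

end
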